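(* Let $G$ be an abelian group and $K=G\oplus G$. Then every uniformly fully inert subgroup of $K$ is commensurable with some fully invariant subgroup of $K$.
   Context: All groups are additively written abelian groups. A subgroup $F$ of $K$ is fully invariant if $\phi(F)\subseteq F$ for every endomorphism $\phi$ of $K$. A subgroup $S$ of $K$ is uniformly fully inert if there is a fixed positive integer $m$ such that $(\phi(S)+S)/S$ has at most $m$ elements for every endomorphism $\phi$ of $K$. Subgroups $B,C$ are commensurable if both $(B+C)/B$ and $(B+C)/C$ are finite. *)

theory Defs
  imports Main "HOL-Library.Product_Plus"
begin

(* Abelian groups are modelled as types of class ab_group_add; the whole type is the group. *)

definition endo :: "('k::ab_group_add \<Rightarrow> 'k) \<Rightarrow> bool" where
  "endo \<phi> \<longleftrightarrow> (\<forall>x y. \<phi> (x + y) = \<phi> x + \<phi> y)"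

definition is_subgroup :: "'k::ab_group_add set \<Rightarrow> bool" where
  "is_subgroup S \<longleftrightarrow> 0 \<in> S \<and> (\<forall>x\<in>S. \<forall>y\<in>S. x + y \<in> S) \<and> (\<forall>x\<in>S. - x \<in> S)"

definition sumset :: "'k::ab_group_add set \<Rightarrow> 'k set \<Rightarrow> 'k set" where
  "sumset A B = {a + b | a b. a \<in> A \<and> b \<in> B}"

(* the set of cosets x + B for x \<in> A, i.e. A/B when B \<subseteq> A *)
definition quot :: "'k::ab_group_add set \<Rightarrow> 'k set \<Rightarrow> 'k set set" where
  "quot A B = (\<lambda>x. (\<lambda>b. x + b) ` B) ` A"

definition fully_invariant :: "'k::ab_group_add set \<Rightarrow> bool" where
  "fully_invariant F \<longleftrightarrow> is_subgroup F \<and> (\<forall>\<phi>. endo \<phi> \<longrightarrow> \<phi> ` F \<subseteq> F)"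

definition uniformly_fully_inert :: "'k::ab_group_add set \<Rightarrow> bool" where
  "uniformly_fully_inert S \<longleftrightarrow> is_subgroup S \<and>
     (\<exists>m::nat. m > 0 \<and> (\<forall>\<phi>. endo \<phi> \<longrightarrow>
        finite (quot (sumset (\<phi> ` S) S) S) \<and> card (quot (sumset (\<phi> ` S) S) S) \<le> m))"

definition commensurable :: "'k::ab_group_add set \<Rightarrow> 'k set \<Rightarrow> bool" where
  "commensurable B C \<longleftrightarrow> finite (quot (sumset B C) B) \<and> finite (quot (sumset B C) C)"

end

theory Submission
  imports Defs "HOL-Library.Function_Algebras"
begin

lemma subg_0: "is_subgroup H \<Longrightarrow> 0 \<in> H" by (simp add: is_subgroup_def)
lemma subg_add: "is_subgroup H \<Longrightarrow> x \<in> H \<Longrightarrow> y \<in> H \<Longrightarrow> x + y \<in> H" by (simp add: is_subgroup_def)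
lemma subg_neg: "is_subgroup H \<Longrightarrow> x \<in> H \<Longrightarrow> - x \<in> H" by (simp add: is_subgroup_def)
lemma subg_diff: "is_subgroup H \<Longrightarrow> x \<in> H \<Longrightarrow> y \<in> H \<Longrightarrow> x - y \<in> H"
  using subg_add[of H x "-y"] subg_neg[of H y] by simp
lemma subg_neg_iff: "is_subgroup H \<Longrightarrow> (- x \<in> H) = (x \<in> H)"
  using subg_neg[of H x] subg_neg[of H "-x"] by auto

lemma coset_eq_iff:
  assumes "is_subgroup H"
  shows "((\<lambda>b. x + b) ` H = (\<lambda>b. y + b) ` H) \<longleftrightarrow> x - y \<in> H"
proof
  assume e: "(\<lambda>b. x + b) ` H = (\<lambda>b. y + b) ` H"
  have "x \<in> (\<lambda>b. x + b) ` H" using subg_0[OF assms] by force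
  then obtain h where "h \<in> H" "x = y + h" using e by auto
  then show "x - y \<in> H" by (simp add: algebra_simps)
next
  assume d: "x - y \<in> H"
  show "(\<lambda>b. x + b) ` H = (\<lambda>b. y + b) ` H"
  proof (intro set_eqI iffI)
    fix z assume "z \<in> (\<lambda>b. x + b) ` H"
    then obtain h where h: "h \<in> H" "z = x + h" by auto
    have "(x - y) + h \<in> H" using subg_add[OF assms d h(1)] .
    moreover have "z = y + ((x - y) + h)" using h by (simp add: algebra_simps)
    ultimately show "z \<in> (\<lambda>b. y + b) ` H" by blast
  next
    fix z assume "z \<in> (\<lambda>b. y + b) ` H"
    then obtain h where h: "h \<in> H" "z = y + h" by auto
    have "- (x - y) + h \<in> H" using subg_add[OF assms subg_neg[OF assms d] h(1)] .
    moreover have "z = x + (- (x - y) + h)" using h by (simp add: algebra_simps)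
    ultimately show "z \<in> (\<lambda>b. x + b) ` H" by blast
  qed
qed

lemma coset_mem_eq:
  assumes "is_subgroup H" "z \<in> (\<lambda>b. x + b) ` H"
  shows "(\<lambda>b. z + b) ` H = (\<lambda>b. x + b) ` H"
proof -
  obtain h where "h \<in> H" "z = x + h" using assms(2) by auto
  then have "z - x \<in> H" by simp
  then show ?thesis using coset_eq_iff[OF assms(1)] by blast
qed

lemma quot_reps:
  assumes "finite (quot A B)" "is_subgroup B"
  shows "\<exists>F. F \<subseteq> A \<and> finite F \<and> A \<subseteq> sumset F B"
proof -
  define r where "r C = (SOME a. a \<in> A \<and> C = (\<lambda>b. a + b) ` B)" for C
  have r: "r C \<in> A \<and> C = (\<lambda>b. r C + b) ` B" if "C \<in> quot A B" for C
  proof -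
    have "\<exists>a. a \<in> A \<and> C = (\<lambda>b. a + b) ` B" using that unfolding quot_def by auto
    then show ?thesis unfolding r_def by (rule someI_ex)
  qed
  have "A \<subseteq> sumset (r ` quot A B) B"
  proof
    fix a assume a: "a \<in> A"
    let ?C = "(\<lambda>b. a + b) ` B"
    have C: "?C \<in> quot A B" using a unfolding quot_def by auto
    have "a - r ?C \<in> B" using r[OF C] coset_eq_iff[OF assms(2), of a "r ?C"] by metis
    then have "a = r ?C + (a - r ?C)" by simp
    then show "a \<in> sumset (r ` quot A B) B" unfolding sumset_def
      using C \<open>a - r ?C \<in> B\<close> by blast
  qed
  moreover have "r ` quot A B \<subseteq> A" using r by auto
  ultimately show ?thesis using assms(1) by blast
qed

lemma quot_finite_from_reps:
  assumes "is_subgroup B" "finite F" "A \<subseteq> sumset F B"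
  shows "finite (quot A B)"
proof -
  have "quot A B \<subseteq> (\<lambda>f. (\<lambda>b. f + b) ` B) ` F"
  proof
    fix C assume "C \<in> quot A B"
    then obtain a where a: "a \<in> A" "C = (\<lambda>b. a + b) ` B" unfolding quot_def by auto
    then obtain f h where fh: "f \<in> F" "h \<in> B" "a = f + h" using assms(3) unfolding sumset_def by blast
    have "a \<in> (\<lambda>b. f + b) ` B" using fh by auto
    then have "C = (\<lambda>b. f + b) ` B" using a coset_mem_eq[OF assms(1)] by auto
    then show "C \<in> (\<lambda>f. (\<lambda>b. f + b) ` B) ` F" using fh by auto
  qed
  then show ?thesis using assms(2) finite_subset by blast
qed

lemma quot_coarser:
  assumes "finite (quot E H)" "is_subgroup H" "is_subgroup H'" "H \<subseteq> H'"
  shows "finite (quot E H')"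
proof -
  obtain F where F: "finite F" "E \<subseteq> sumset F H" using quot_reps[OF assms(1,2)] by blast
  have "sumset F H \<subseteq> sumset F H'" using assms(4) unfolding sumset_def by blast
  then show ?thesis using quot_finite_from_reps[OF assms(3) F(1)] F(2) by blast
qed

lemma quot_inter:
  assumes "finite (quot E A)" "finite (quot E B)" "is_subgroup A" "is_subgroup B"
  shows "finite (quot E (A \<inter> B))"
proof -
  have sAB: "is_subgroup (A \<inter> B)" using assms(3,4) unfolding is_subgroup_def by auto
  define g where "g x = ((\<lambda>b. x + b) ` A, (\<lambda>b. x + b) ` B)" for x
  have gE: "g ` E \<subseteq> quot E A \<times> quot E B" unfolding g_def quot_def by auto
  then have fin: "finite (g ` E)" using assms(1,2) finite_subset by blast
  define h where "h p = (\<lambda>b. (SOME x. x \<in> E \<and> g x = p) + b) ` (A \<inter> B)" for p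
  have "quot E (A \<inter> B) \<subseteq> h ` g ` E"
  proof
    fix C assume "C \<in> quot E (A \<inter> B)"
    then obtain x where x: "x \<in> E" "C = (\<lambda>b. x + b) ` (A \<inter> B)" unfolding quot_def by auto
    define y where "y = (SOME y. y \<in> E \<and> g y = g x)"
    have y: "y \<in> E \<and> g y = g x" unfolding y_def by (rule someI[of _ x]) (use x in auto)
    then have "y - x \<in> A" "y - x \<in> B" unfolding g_def
      using coset_eq_iff[OF assms(3)] coset_eq_iff[OF assms(4)] by auto
    then have "(\<lambda>b. y + b) ` (A \<inter> B) = (\<lambda>b. x + b) ` (A \<inter> B)"
      using coset_eq_iff[OF sAB] by auto
    then have "C = h (g x)" unfolding h_def y_def[symmetric] using x by simp
    then show "C \<in> h ` g ` E" using x by auto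
  qed
  then show ?thesis using fin finite_subset by blast
qed


lemma neumann_aux:
  fixes C :: "('b::ab_group_add \<times> 'b set) set"
  assumes "card (snd ` C) = n" "finite C" "C \<noteq> {}" "is_subgroup E"
    "\<forall>p\<in>C. is_subgroup (snd p) \<and> snd p \<subseteq> E"
    "E \<subseteq> (\<Union>p\<in>C. (\<lambda>u. fst p + u) ` snd p)"
  shows "\<exists>p\<in>C. finite (quot E (snd p))"
  using assms
proof (induction n arbitrary: C rule: less_induct)
  case (less n C)
  obtain c0 H where cH: "(c0, H) \<in> C" using less.prems(3) by auto
  show ?case
  proof (cases "finite (quot E H)")
    case True then show ?thesis using cH by force
  next
    case False
    have sH: "is_subgroup H" "H \<subseteq> E" using less.prems(5) cH by fastforce+
    define A where "A = (\<lambda>c. (\<lambda>b. c + b) ` H) ` fst ` C"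
    have "finite A" unfolding A_def using less.prems(2) by auto
    then obtain D where D: "D \<in> quot E H" "D \<notin> A" using False
      by (metis finite_subset subsetI)
    then obtain b where b: "b \<in> E" "D = (\<lambda>u. b + u) ` H" unfolding quot_def by auto
    have disj: "(\<lambda>u. b + u) ` H \<inter> (\<lambda>u. c + u) ` H = {}" if "(c, H) \<in> C" for c
    proof (rule ccontr)
      assume "(\<lambda>u. b + u) ` H \<inter> (\<lambda>u. c + u) ` H \<noteq> {}"
      then obtain z where z: "z \<in> (\<lambda>u. b + u) ` H" "z \<in> (\<lambda>u. c + u) ` H" by blast
      have "(\<lambda>u. b + u) ` H = (\<lambda>u. c + u) ` H"
        using coset_mem_eq[OF sH(1) z(1)] coset_mem_eq[OF sH(1) z(2)] by simp
      then have "D \<in> A" using b that unfolding A_def by force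
      then show False using D by simp
    qed
    define C' where "C' = {p \<in> C. snd p \<noteq> H} \<union>
       (\<lambda>(p, q). (fst p - b + fst q, snd q)) ` ({p \<in> C. snd p = H} \<times> {q \<in> C. snd q \<noteq> H})"
    have finC': "finite C'" unfolding C'_def using less.prems(2) by auto
    have sub: "snd ` C' \<subseteq> snd ` C - {H}" unfolding C'_def by force
    have cardlt: "card (snd ` C') < n"
    proof -
      have "card (snd ` C') \<le> card (snd ` C - {H})"
        using sub less.prems(2) by (intro card_mono) auto
      also have "\<dots> < card (snd ` C)"
        using cH less.prems(2) by (intro card_Diff1_less) force+
      finally show ?thesis using less.prems(1) by simp
    qed
    have sC': "\<forall>p\<in>C'. is_subgroup (snd p) \<and> snd p \<subseteq> E"
      using less.prems(5) unfolding C'_def by fastforce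
    have cov: "E \<subseteq> (\<Union>p\<in>C'. (\<lambda>u. fst p + u) ` snd p)"
    proof
      fix x assume x: "x \<in> E"
      then obtain p where p: "p \<in> C" "x \<in> (\<lambda>u. fst p + u) ` snd p" using less.prems(6) by blast
      show "x \<in> (\<Union>p\<in>C'. (\<lambda>u. fst p + u) ` snd p)"
      proof (cases "snd p = H")
        case False
        then have "p \<in> C'" unfolding C'_def using p by auto
        then show ?thesis using p by blast
      next
        case True
        then obtain h where h: "h \<in> H" "x = fst p + h" using p by auto
        have "b + h \<in> E" using subg_add[OF less.prems(4) b(1)] h sH by auto
        then obtain q where q: "q \<in> C" "b + h \<in> (\<lambda>u. fst q + u) ` snd q" using less.prems(6) by blast
        have qH: "snd q \<noteq> H"
        proof
          assume "snd q = H"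
          then have "(fst q, H) \<in> C" using q by (metis prod.collapse)
          moreover have "b + h \<in> (\<lambda>u. b + u) ` H" using h by auto
          ultimately show False using disj q \<open>snd q = H\<close> by blast
        qed
        obtain u where u: "u \<in> snd q" "b + h = fst q + u" using q by auto
        have "x = (fst p - b + fst q) + u" using h u by (simp add: algebra_simps)
        moreover have "(fst p - b + fst q, snd q) \<in> C'"
          unfolding C'_def using p True q qH by force
        ultimately show ?thesis using u
          by (intro UN_I[of "(fst p - b + fst q, snd q)"] image_eqI[of _ _ u]) auto
      qed
    qed
    have "C' \<noteq> {}" using cov subg_0[OF less.prems(4)] by auto
    from less.IH[OF cardlt refl finC' this less.prems(4) sC' cov]
    obtain p where "p \<in> C'" "finite (quot E (snd p))" by blast
    moreover have "snd p \<in> snd ` C" using sub \<open>p \<in> C'\<close> by auto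
    ultimately show ?thesis by (metis image_iff)
  qed
qed

lemma neumann:
  fixes C :: "('b::ab_group_add \<times> 'b set) set"
  assumes "finite C" "C \<noteq> {}" "is_subgroup E"
    "\<forall>p\<in>C. is_subgroup (snd p) \<and> snd p \<subseteq> E"
    "E \<subseteq> (\<Union>p\<in>C. (\<lambda>u. fst p + u) ` snd p)"
  shows "\<exists>p\<in>C. finite (quot E (snd p))"
  using neumann_aux[OF refl assms] .


lemma endo_0: "endo \<phi> \<Longrightarrow> \<phi> 0 = 0"
  unfolding endo_def by (metis add_cancel_left_left add_0)
lemma endo_add: "endo \<phi> \<Longrightarrow> \<phi> (x + y) = \<phi> x + \<phi> y"
  unfolding endo_def by blast
lemma endo_neg: "endo \<phi> \<Longrightarrow> \<phi> (- x) = - \<phi> x"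
proof -
  assume e: "endo \<phi>"
  have "\<phi> (- x) + \<phi> x = 0" using endo_add[OF e, of "-x" x] endo_0[OF e] by simp
  then show ?thesis by (metis eq_neg_iff_add_eq_0)
qed
lemma endo_diff: "endo \<phi> \<Longrightarrow> \<phi> (x - y) = \<phi> x - \<phi> y"
  using endo_add[of \<phi> x "-y"] endo_neg[of \<phi> y] by simp
lemma endo_id: "endo id" unfolding endo_def by simp
lemma endo_comp: "endo \<phi> \<Longrightarrow> endo \<psi> \<Longrightarrow> endo (\<phi> \<circ> \<psi>)" unfolding endo_def by simp
lemma endo_plus: "endo \<phi> \<Longrightarrow> endo \<psi> \<Longrightarrow> endo (\<phi> + \<psi>)" unfolding endo_def by (simp add: algebra_simps)
lemma endo_uminus: "endo \<phi> \<Longrightarrow> endo (- \<phi>)" unfolding endo_def by simp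
lemma endo_zero: "endo (0 :: 'k::ab_group_add \<Rightarrow> 'k)" unfolding endo_def by simp

definition Rend :: "('k::ab_group_add \<Rightarrow> 'k) set" where "Rend = {\<phi>. endo \<phi>}"

lemma subg_Rend: "is_subgroup (Rend :: ('k::ab_group_add \<Rightarrow> 'k) set)"
  unfolding is_subgroup_def Rend_def using endo_zero endo_plus endo_uminus by auto

definition Uset :: "'k::ab_group_add set \<Rightarrow> 'k \<Rightarrow> ('k \<Rightarrow> 'k) set" where
  "Uset S y = {\<phi> \<in> Rend. \<phi> y \<in> S}"
definition Pset :: "'k::ab_group_add set \<Rightarrow> 'k set" where
  "Pset S = {y. finite (quot Rend (Uset S y))}"
definition Rorb :: "'k::ab_group_add \<Rightarrow> 'k set" where
  "Rorb y = (\<lambda>\<phi>. \<phi> y) ` Rend"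

lemma subg_Uset: "is_subgroup S \<Longrightarrow> is_subgroup (Uset S y)"
  unfolding is_subgroup_def Uset_def Rend_def using endo_zero endo_plus endo_uminus by auto
lemma Uset_sub: "Uset S y \<subseteq> Rend" unfolding Uset_def by auto

lemma subg_sumset:
  assumes A: "is_subgroup A" and B: "is_subgroup B"
  shows "is_subgroup (sumset A B)"
proof -
  have z: "0 \<in> sumset A B" unfolding sumset_def using subg_0[OF A] subg_0[OF B] by force
  have a: "x + y \<in> sumset A B" if xy: "x \<in> sumset A B" "y \<in> sumset A B" for x y
  proof -
    obtain a b where ab: "a \<in> A" "b \<in> B" "x = a + b" using xy(1) unfolding sumset_def by blast
    obtain a' b' where ab': "a' \<in> A" "b' \<in> B" "y = a' + b'" using xy(2) unfolding sumset_def by blast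
    have "x + y = (a + a') + (b + b')" using ab ab' by (simp add: algebra_simps)
    then show ?thesis unfolding sumset_def using subg_add[OF A ab(1) ab'(1)] subg_add[OF B ab(2) ab'(2)] by blast
  qed
  have n: "- x \<in> sumset A B" if xx: "x \<in> sumset A B" for x
  proof -
    obtain a b where ab: "a \<in> A" "b \<in> B" "x = a + b" using xx unfolding sumset_def by blast
    have "- x = (- a) + (- b)" using ab by (simp add: algebra_simps)
    then show ?thesis unfolding sumset_def using subg_neg[OF A ab(1)] subg_neg[OF B ab(2)] by blast
  qed
  show ?thesis unfolding is_subgroup_def using z a n by blast
qed

lemma subg_Rorb: "is_subgroup (Rorb y)"
proof -
  have z: "0 \<in> Rorb y" unfolding Rorb_def Rend_def using endo_zero by (intro image_eqI[of _ _ 0]) auto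
  have a: "a + b \<in> Rorb y" if ab: "a \<in> Rorb y" "b \<in> Rorb y" for a b
  proof -
    obtain f g where "endo f" "endo g" "a = f y" "b = g y" using ab unfolding Rorb_def Rend_def by auto
    then show ?thesis unfolding Rorb_def Rend_def using endo_plus by (intro image_eqI[of _ _ "f + g"]) auto
  qed
  have n: "- a \<in> Rorb y" if aa: "a \<in> Rorb y" for a
  proof -
    obtain f where "endo f" "a = f y" using aa unfolding Rorb_def Rend_def by auto
    then show ?thesis unfolding Rorb_def Rend_def using endo_uminus by (intro image_eqI[of _ _ "- f"]) auto
  qed
  show ?thesis unfolding is_subgroup_def using z a n by blast
qed

lemma subg_Pset:
  assumes S: "is_subgroup S"
  shows "is_subgroup (Pset S)"
proof -
  have U0: "Uset S 0 = Rend" unfolding Uset_def Rend_def using subg_0[OF S] by (auto simp: endo_0)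
  have "quot Rend Rend \<subseteq> {Rend}"
  proof
    fix C assume "C \<in> quot Rend Rend"
    then obtain x where x: "x \<in> Rend" "C = (\<lambda>b. x + b) ` Rend" unfolding quot_def by auto
    have "x - 0 \<in> Rend" using x by simp
    then have "C = (\<lambda>b. 0 + b) ` Rend" using x coset_eq_iff[OF subg_Rend] by blast
    then show "C \<in> {Rend}" by simp
  qed
  then have "finite (quot Rend (Uset S 0))" unfolding U0 using finite_subset by auto
  then have p0: "0 \<in> Pset S" unfolding Pset_def by simp
  have pn: "- x \<in> Pset S" if "x \<in> Pset S" for x
  proof -
    have "\<phi> (- x) \<in> S \<longleftrightarrow> \<phi> x \<in> S" if "endo \<phi>" for \<phi>
      using subg_neg_iff[OF S, of "\<phi> x"] endo_neg[OF that, of x] by simp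
    then have "Uset S (- x) = Uset S x" unfolding Uset_def Rend_def by blast
    then show ?thesis using that unfolding Pset_def by simp
  qed
  have pa: "x + y \<in> Pset S" if "x \<in> Pset S" "y \<in> Pset S" for x y
  proof -
    have "finite (quot Rend (Uset S x \<inter> Uset S y))"
      using quot_inter[of Rend "Uset S x" "Uset S y"] that subg_Uset[OF S] unfolding Pset_def by auto
    moreover have "Uset S x \<inter> Uset S y \<subseteq> Uset S (x + y)"
      unfolding Uset_def Rend_def using subg_add[OF S] by (auto simp: endo_add)
    moreover have "is_subgroup (Uset S x \<inter> Uset S y)"
      using subg_Uset[OF S] unfolding is_subgroup_def by auto
    ultimately show ?thesis unfolding Pset_def using quot_coarser subg_Uset[OF S] by blast
  qed
  show ?thesis unfolding is_subgroup_def using p0 pn pa by blast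
qed

lemma Rorb_fin:
  assumes S: "is_subgroup S" and y: "y \<in> Pset S"
  shows "\<exists>F. finite F \<and> Rorb y \<subseteq> sumset F S"
proof -
  obtain \<Phi> where \<Phi>: "finite \<Phi>" "Rend \<subseteq> sumset \<Phi> (Uset S y)"
    using quot_reps[of Rend "Uset S y"] y subg_Uset[OF S] unfolding Pset_def by blast
  have "Rorb y \<subseteq> sumset ((\<lambda>\<psi>. \<psi> y) ` \<Phi>) S"
  proof
    fix z assume "z \<in> Rorb y"
    then obtain \<phi> where \<phi>: "\<phi> \<in> Rend" "z = \<phi> y" unfolding Rorb_def by auto
    then obtain \<psi> u where "\<psi> \<in> \<Phi>" "u \<in> Uset S y" "\<phi> = \<psi> + u" using \<Phi>(2) unfolding sumset_def by blast
    then show "z \<in> sumset ((\<lambda>\<psi>. \<psi> y) ` \<Phi>) S" unfolding sumset_def Uset_def using \<phi> by auto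
  qed
  then show ?thesis using \<Phi>(1) by blast
qed

fun Tset :: "'k::ab_group_add set \<Rightarrow> 'k list \<Rightarrow> 'k set" where
  "Tset S [] = S"
| "Tset S (y # ys) = sumset (Rorb y) (Tset S ys)"

lemma subg_Tset: "is_subgroup S \<Longrightarrow> is_subgroup (Tset S ys)"
  by (induction ys) (auto intro: subg_sumset subg_Rorb)

lemma S_sub_Tset: "is_subgroup S \<Longrightarrow> S \<subseteq> Tset S ys"
proof (induction ys)
  case Nil then show ?case by simp
next
  case (Cons y ys)
  show ?case
  proof
    fix s assume "s \<in> S"
    then have "s \<in> Tset S ys" using Cons by auto
    moreover have "s = 0 + s" by simp
    ultimately show "s \<in> Tset S (y # ys)" unfolding Tset.simps sumset_def
      using subg_0[OF subg_Rorb[of y]] by blast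
  qed
qed

lemma Rorb_sub_Tset: "is_subgroup S \<Longrightarrow> y \<in> set ys \<Longrightarrow> Rorb y \<subseteq> Tset S ys"
proof (induction ys)
  case Nil then show ?case by simp
next
  case (Cons z ys)
  show ?case
  proof (cases "y = z")
    case True
    show ?thesis
    proof
      fix a assume "a \<in> Rorb y"
      moreover have "a = a + 0" by simp
      ultimately show "a \<in> Tset S (z # ys)" unfolding Tset.simps sumset_def
        using True subg_0[OF subg_Tset[OF Cons.prems(1)], of ys] by blast
    qed
  next
    case False
    then have sub: "Rorb y \<subseteq> Tset S ys" using Cons by auto
    show ?thesis
    proof
      fix a assume "a \<in> Rorb y"
      then have "a \<in> Tset S ys" using sub by blast
      moreover have "a = 0 + a" by simp
      ultimately show "a \<in> Tset S (z # ys)" unfolding Tset.simps sumset_def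
        using subg_0[OF subg_Rorb[of z]] by blast
    qed
  qed
qed

lemma Tset_fin:
  assumes S: "is_subgroup S"
  shows "set ys \<subseteq> Pset S \<Longrightarrow> \<exists>F. finite F \<and> Tset S ys \<subseteq> sumset F S"
proof (induction ys)
  case Nil
  have "S \<subseteq> sumset {0} S" unfolding sumset_def by force
  then show ?case by auto
next
  case (Cons y ys)
  obtain F where F: "finite F" "Tset S ys \<subseteq> sumset F S" using Cons by auto
  obtain G where G: "finite G" "Rorb y \<subseteq> sumset G S" using Rorb_fin[OF S] Cons.prems by (meson list.set_intros(1) subsetD)
  have "Tset S (y # ys) \<subseteq> sumset (sumset G F) S"
  proof
    fix z assume "z \<in> Tset S (y # ys)"
    then obtain a t where at: "a \<in> Rorb y" "t \<in> Tset S ys" "z = a + t" by (auto simp: sumset_def)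
    obtain g s where gs: "g \<in> G" "s \<in> S" "a = g + s" using at G unfolding sumset_def by blast
    obtain f s' where fs: "f \<in> F" "s' \<in> S" "t = f + s'" using at F unfolding sumset_def by blast
    have "z = (g + f) + (s + s')" using at gs fs by (simp add: algebra_simps)
    moreover have "s + s' \<in> S" using subg_add[OF S gs(2) fs(2)] .
    ultimately show "z \<in> sumset (sumset G F) S" unfolding sumset_def using gs fs by blast
  qed
  moreover have "finite (sumset G F)"
  proof -
    have "sumset G F = (\<lambda>(a, b). a + b) ` (G \<times> F)" unfolding sumset_def by auto
    then show ?thesis using F G by simp
  qed
  ultimately show ?case by blast
qed

inductive_set spanR :: "'k::ab_group_add set \<Rightarrow> 'k set" for L where
  sp_gen: "y \<in> L \<Longrightarrow> endo \<phi> \<Longrightarrow> \<phi> y \<in> spanR L"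
| sp_zero: "0 \<in> spanR L"
| sp_add: "a \<in> spanR L \<Longrightarrow> b \<in> spanR L \<Longrightarrow> a + b \<in> spanR L"
| sp_neg: "a \<in> spanR L \<Longrightarrow> - a \<in> spanR L"

lemma spanR_fi: "fully_invariant (spanR L)"
proof -
  have "\<psi> a \<in> spanR L" if "endo \<psi>" "a \<in> spanR L" for \<psi> a
    using that(2)
  proof induction
    case (sp_gen y \<phi>)
    then show ?case using spanR.sp_gen[of y L "\<psi> \<circ> \<phi>"] endo_comp[OF that(1)] by simp
  next
    case sp_zero then show ?case using endo_0[OF that(1)] spanR.sp_zero by simp
  next
    case (sp_add a b) then show ?case using endo_add[OF that(1)] spanR.sp_add by simp
  next
    case (sp_neg a) then show ?case using endo_neg[OF that(1)] spanR.sp_neg by simp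
  qed
  then show ?thesis unfolding fully_invariant_def is_subgroup_def
    using spanR.sp_zero spanR.sp_add spanR.sp_neg by blast
qed

lemma L_sub_spanR: "L \<subseteq> spanR L"
  using sp_gen[of _ L id] endo_id by auto

lemma spanR_sub:
  assumes "is_subgroup T" "\<forall>y\<in>L. Rorb y \<subseteq> T"
  shows "spanR L \<subseteq> T"
proof
  fix a assume "a \<in> spanR L"
  then show "a \<in> T"
  proof induction
    case (sp_gen y \<phi>) then show ?case using assms(2) unfolding Rorb_def Rend_def by auto
  next
    case sp_zero then show ?case using subg_0[OF assms(1)] .
  next
    case (sp_add a b) then show ?case using subg_add[OF assms(1)] by blast
  next
    case (sp_neg a) then show ?case using subg_neg[OF assms(1)] by blast
  qed
qed


lemma card_bound:
  assumes S: "is_subgroup S"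
    and bnd: "\<forall>\<phi>. endo \<phi> \<longrightarrow> finite (quot (sumset (\<phi> ` S) S) S) \<and> card (quot (sumset (\<phi> ` S) S) S) \<le> m"
    and e: "endo \<phi>" and fI: "finite I" and gS: "\<forall>i\<in>I. g i \<in> S"
    and dist: "\<forall>i\<in>I. \<forall>j\<in>I. i \<noteq> j \<longrightarrow> \<phi> (g i) - \<phi> (g j) \<notin> S"
  shows "card I \<le> m"
proof -
  let ?h = "\<lambda>i. (\<lambda>b. \<phi> (g i) + b) ` S"
  have inj: "inj_on ?h I"
  proof (rule inj_onI)
    fix i j assume ij: "i \<in> I" "j \<in> I" "?h i = ?h j"
    then have "\<phi> (g i) - \<phi> (g j) \<in> S" using coset_eq_iff[OF S] by blast
    then show "i = j" using dist ij by blast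
  qed
  have sub: "?h ` I \<subseteq> quot (sumset (\<phi> ` S) S) S"
  proof
    fix C assume "C \<in> ?h ` I"
    then obtain i where i: "i \<in> I" "C = ?h i" by auto
    have "\<phi> (g i) = \<phi> (g i) + 0" by simp
    then have "\<phi> (g i) \<in> sumset (\<phi> ` S) S" unfolding sumset_def using gS i subg_0[OF S] by blast
    then show "C \<in> quot (sumset (\<phi> ` S) S) S" unfolding quot_def using i by blast
  qed
  have "card I = card (?h ` I)" using inj by (simp add: card_image)
  also have "\<dots> \<le> card (quot (sumset (\<phi> ` S) S) S)" using sub bnd e by (intro card_mono) auto
  also have "\<dots> \<le> m" using bnd e by auto
  finally show ?thesis .
qed

lemma step1:
  assumes S: "is_subgroup S" and m: "m > 0"
    and bnd: "\<forall>\<phi>. endo \<phi> \<longrightarrow> finite (quot (sumset (\<phi> ` S) S) S) \<and> card (quot (sumset (\<phi> ` S) S) S) \<le> m"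
  shows "finite (quot S (S \<inter> Pset S))"
proof (rule ccontr)
  let ?L = "S \<inter> Pset S"
  have sL: "is_subgroup ?L" using S subg_Pset[OF S] unfolding is_subgroup_def by auto
  assume "infinite (quot S ?L)"
  then obtain Q where Q: "Q \<subseteq> quot S ?L" "finite Q" "card Q = Suc m"
    using infinite_arbitrarily_large by blast
  define g where "g C = (SOME a. a \<in> S \<and> C = (\<lambda>b. a + b) ` ?L)" for C
  have g: "g C \<in> S \<and> C = (\<lambda>b. g C + b) ` ?L" if "C \<in> Q" for C
  proof -
    have "\<exists>a. a \<in> S \<and> C = (\<lambda>b. a + b) ` ?L" using that Q(1) unfolding quot_def by auto
    then show ?thesis unfolding g_def by (rule someI_ex)
  qed
  have notP: "g C - g D \<notin> Pset S" if "C \<in> Q" "D \<in> Q" "C \<noteq> D" for C D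
  proof
    assume "g C - g D \<in> Pset S"
    moreover have "g C - g D \<in> S" using subg_diff[OF S] g that by blast
    ultimately have "g C - g D \<in> ?L" by blast
    then have "(\<lambda>b. g C + b) ` ?L = (\<lambda>b. g D + b) ` ?L" using coset_eq_iff[OF sL] by blast
    then show False using g that by metis
  qed
  define Pr where "Pr = {(C, D). C \<in> Q \<and> D \<in> Q \<and> C \<noteq> D}"
  define CC where "CC = (\<lambda>(C, D). (0 :: 'a \<Rightarrow> 'a, Uset S (g C - g D))) ` Pr"
  have finPr: "finite Pr"
  proof -
    have "Pr \<subseteq> Q \<times> Q" unfolding Pr_def by auto
    then show ?thesis using Q(2) finite_subset by blast
  qed
  have "finite CC" unfolding CC_def using finPr by simp
  moreover have "CC \<noteq> {}"
  proof -
    have "Q \<noteq> {}" using Q by auto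
    then obtain C where C: "C \<in> Q" by blast
    have "card (Q - {C}) = m" using Q C by simp
    then have "Q - {C} \<noteq> {}" using m by (metis card.empty less_irrefl)
    then obtain D where "D \<in> Q" "D \<noteq> C" by blast
    then have "(C, D) \<in> Pr" using C unfolding Pr_def by auto
    then show ?thesis unfolding CC_def by blast
  qed
  moreover have "\<forall>p\<in>CC. is_subgroup (snd p) \<and> snd p \<subseteq> Rend"
    unfolding CC_def using subg_Uset[OF S] Uset_sub by fastforce
  ultimately have nc: "\<not> Rend \<subseteq> (\<Union>p\<in>CC. (\<lambda>u. fst p + u) ` snd p)"
  proof (intro notI)
    assume a: "finite CC" "CC \<noteq> {}" "\<forall>p\<in>CC. is_subgroup (snd p) \<and> snd p \<subseteq> Rend"
      "Rend \<subseteq> (\<Union>p\<in>CC. (\<lambda>u. fst p + u) ` snd p)"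
    obtain p where p: "p \<in> CC" "finite (quot Rend (snd p))" using neumann[OF a(1,2) subg_Rend a(3,4)] by blast
    then obtain C D where "(C, D) \<in> Pr" "p = (0, Uset S (g C - g D))" unfolding CC_def by auto
    then show False using p notP unfolding Pr_def Pset_def by auto
  qed
  then obtain \<phi> where \<phi>: "\<phi> \<in> Rend" "\<phi> \<notin> (\<Union>p\<in>CC. (\<lambda>u. fst p + u) ` snd p)" by blast
  have dist: "\<forall>C\<in>Q. \<forall>D\<in>Q. C \<noteq> D \<longrightarrow> \<phi> (g C) - \<phi> (g D) \<notin> S"
  proof (intro ballI impI)
    fix C D assume CD: "C \<in> Q" "D \<in> Q" "C \<noteq> D"
    then have "(0, Uset S (g C - g D)) \<in> CC" unfolding CC_def Pr_def by force
    then have "\<phi> \<notin> Uset S (g C - g D)" using \<phi>(2) by force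
    then have "\<phi> (g C - g D) \<notin> S" using \<phi>(1) unfolding Uset_def by auto
    moreover have "endo \<phi>" using \<phi>(1) unfolding Rend_def by simp
    ultimately show "\<phi> (g C) - \<phi> (g D) \<notin> S" using endo_diff[of \<phi> "g C" "g D"] by simp
  qed
  have "card Q \<le> m"
    using card_bound[OF S bnd _ Q(2), of \<phi> g] \<phi>(1) g dist unfolding Rend_def by auto
  then show False using Q(3) by simp
qed


lemma W_fin:
  assumes S: "is_subgroup S"
  shows "set zs \<subseteq> Pset S \<Longrightarrow> is_subgroup {\<phi> \<in> Rend. \<forall>y\<in>set zs. \<phi> y \<in> S} \<and>
     finite (quot Rend {\<phi> \<in> Rend. \<forall>y\<in>set zs. \<phi> y \<in> S})"
proof (induction zs)
  case Nil
  have "{\<phi> \<in> Rend. \<forall>y\<in>set []. \<phi> y \<in> S} = Uset S 0"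
    unfolding Uset_def Rend_def using subg_0[OF S] by (auto simp: endo_0)
  moreover have "0 \<in> Pset S" using subg_0[OF subg_Pset[OF S]] .
  ultimately show ?case using subg_Rend unfolding Pset_def by simp
next
  case (Cons z zs)
  have e: "{\<phi> \<in> Rend. \<forall>y\<in>set (z # zs). \<phi> y \<in> S} = Uset S z \<inter> {\<phi> \<in> Rend. \<forall>y\<in>set zs. \<phi> y \<in> S}"
    unfolding Uset_def by auto
  have IH: "is_subgroup {\<phi> \<in> Rend. \<forall>y\<in>set zs. \<phi> y \<in> S}" "finite (quot Rend {\<phi> \<in> Rend. \<forall>y\<in>set zs. \<phi> y \<in> S})"
    using Cons by auto
  have "finite (quot Rend (Uset S z))" using Cons.prems unfolding Pset_def by auto
  then have "finite (quot Rend (Uset S z \<inter> {\<phi> \<in> Rend. \<forall>y\<in>set zs. \<phi> y \<in> S}))"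
    using quot_inter[OF _ IH(2) subg_Uset[OF S] IH(1)] by blast
  moreover have "is_subgroup (Uset S z \<inter> {\<phi> \<in> Rend. \<forall>y\<in>set zs. \<phi> y \<in> S})"
    using subg_Uset[OF S, of z] IH(1) unfolding is_subgroup_def by auto
  ultimately show ?case unfolding e by simp
qed

lemma card_filter_sum: "finite A \<Longrightarrow> card {x \<in> A. P x} = (\<Sum>x\<in>A. if P x then 1 else 0)"
  by (simp add: sum.If_cases Int_def)

lemma chain_bound:
  assumes S: "is_subgroup S"
    and bnd: "\<forall>\<phi>. endo \<phi> \<longrightarrow> finite (quot (sumset (\<phi> ` S) S) S) \<and> card (quot (sumset (\<phi> ` S) S) S) \<le> m"
    and ysL: "set ys \<subseteq> S \<inter> Pset S"
    and ch: "\<forall>i<length ys. \<not> Rorb (ys ! i) \<subseteq> Tset S (take i ys)"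
  shows "length ys \<le> 2 * m"
proof (cases "length ys = 0")
  case True then show ?thesis by simp
next
  case False
  define t where "t = length ys"
  have tpos: "t > 0" using False unfolding t_def by simp
  define W where "W = {\<phi> \<in> Rend. \<forall>y\<in>set ys. \<phi> y \<in> S}"
  have sW: "is_subgroup W" and finQ: "finite (quot Rend W)"
    using W_fin[OF S, of ys] ysL unfolding W_def by auto
  define V where "V i = {\<phi> \<in> Rend. \<phi> (ys ! i) \<in> Tset S (take i ys)}" for i
  have sV: "is_subgroup (V i)" for i
  proof -
    have sT: "is_subgroup (Tset S (take i ys))" using subg_Tset[OF S] .
    have z: "0 \<in> V i" unfolding V_def Rend_def using endo_zero subg_0[OF sT] by simp
    have a: "f + g \<in> V i" if fg: "f \<in> V i" "g \<in> V i" for f g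
    proof -
      have e: "endo f" "endo g" "f (ys ! i) \<in> Tset S (take i ys)" "g (ys ! i) \<in> Tset S (take i ys)"
        using fg unfolding V_def Rend_def by auto
      have "(f + g) (ys ! i) \<in> Tset S (take i ys)" using subg_add[OF sT e(3,4)] by simp
      moreover have "endo (f + g)" using endo_plus[OF e(1,2)] .
      ultimately show ?thesis unfolding V_def Rend_def by blast
    qed
    have n: "- f \<in> V i" if ff: "f \<in> V i" for f
    proof -
      have e: "endo f" "f (ys ! i) \<in> Tset S (take i ys)"
        using ff unfolding V_def Rend_def by auto
      have "(- f) (ys ! i) \<in> Tset S (take i ys)" using subg_neg[OF sT e(2)] by simp
      moreover have "endo (- f)" using endo_uminus[OF e(1)] .
      ultimately show ?thesis unfolding V_def Rend_def by blast
    qed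
    show ?thesis unfolding is_subgroup_def using z a n by blast
  qed
  have WV: "W \<subseteq> V i" if "i < t" for i
  proof
    fix \<phi> assume "\<phi> \<in> W"
    moreover have "ys ! i \<in> set ys" using that unfolding t_def by simp
    ultimately show "\<phi> \<in> V i" unfolding W_def V_def using S_sub_Tset[OF S] by blast
  qed
  have notV: "\<exists>a\<in>Rend. a \<notin> V i" if it: "i < t" for i
  proof -
    have "\<not> Rorb (ys ! i) \<subseteq> Tset S (take i ys)" using ch it unfolding t_def by simp
    then obtain z where z: "z \<in> Rorb (ys ! i)" "z \<notin> Tset S (take i ys)" by blast
    then obtain a where "a \<in> Rend" "z = a (ys ! i)" unfolding Rorb_def by blast
    then show ?thesis using z unfolding V_def by blast
  qed
  define Q where "Q = quot Rend W"
  have Qne: "Q \<noteq> {}" unfolding Q_def quot_def using subg_0[OF subg_Rend] by blast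
  have Qmem: "C \<subseteq> V i \<longleftrightarrow> x \<in> V i" if it: "i < t" and Ceq: "C = (\<lambda>b. x + b) ` W" for C x i
  proof
    assume "C \<subseteq> V i"
    moreover have "x \<in> C" using Ceq subg_0[OF sW] by force
    ultimately show "x \<in> V i" by blast
  next
    assume "x \<in> V i"
    show "C \<subseteq> V i"
    proof
      fix c assume "c \<in> C"
      then obtain w where w: "w \<in> W" "c = x + w" using Ceq by blast
      then have "w \<in> V i" using WV[OF it] by blast
      then show "c \<in> V i" using subg_add[OF sV[of i] \<open>x \<in> V i\<close>] w(2) by simp
    qed
  qed
  define Qin where "Qin i = {C \<in> Q. C \<subseteq> V i}" for i
  have half: "card (Qin i) \<le> card (Q - Qin i)" if it: "i < t" for i
  proof -
    obtain a where a: "a \<in> Rend" "a \<notin> V i" using notV[OF it] by blast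
    let ?\<tau> = "\<lambda>C. (\<lambda>x. a + x) ` C"
    have inj: "inj_on ?\<tau> (Qin i)"
    proof (rule inj_onI)
      fix C D assume "?\<tau> C = ?\<tau> D"
      moreover have "inj (\<lambda>x. a + x)" by (simp add: inj_on_def)
      ultimately show "C = D" by (simp add: inj_image_eq_iff)
    qed
    have "?\<tau> ` Qin i \<subseteq> Q - Qin i"
    proof
      fix D assume "D \<in> ?\<tau> ` Qin i"
      then obtain C where C: "C \<in> Qin i" "D = ?\<tau> C" by blast
      then obtain x where x: "x \<in> Rend" "C = (\<lambda>b. x + b) ` W" unfolding Qin_def Q_def quot_def by auto
      have xV: "x \<in> V i" using Qmem[OF it x(2)] C(1) unfolding Qin_def by auto
      have D: "D = (\<lambda>b. (a + x) + b) ` W" unfolding C(2) x(2) image_image add.assoc ..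
      have axR: "a + x \<in> Rend" using subg_add[OF subg_Rend a(1) x(1)] .
      have "a + x \<notin> V i"
      proof
        assume "a + x \<in> V i"
        then have "(a + x) - x \<in> V i" using subg_diff[OF sV[of i] _ xV] by blast
        then show False using a by simp
      qed
      then have "\<not> D \<subseteq> V i" using Qmem[OF it D] by blast
      moreover have "D \<in> Q" unfolding Q_def quot_def using D axR by blast
      ultimately show "D \<in> Q - Qin i" unfolding Qin_def by blast
    qed
    moreover have "finite (Q - Qin i)" using finQ unfolding Q_def by simp
    ultimately show ?thesis using card_inj_on_le[OF inj] by blast
  qed
  have half2: "card Q \<le> 2 * card {C \<in> Q. \<not> C \<subseteq> V i}" if "i < t" for i
  proof -
    have sub: "Qin i \<subseteq> Q" unfolding Qin_def by blast
    have fQ: "finite Q" using finQ unfolding Q_def .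
    have "finite (Qin i)" using finite_subset[OF sub fQ] .
    then have "card (Q - Qin i) = card Q - card (Qin i)" using card_Diff_subset[OF _ sub] by blast
    moreover have "card (Qin i) \<le> card Q" using card_mono[OF fQ sub] .
    ultimately have "card Q = card (Qin i) + card (Q - Qin i)" by simp
    moreover have "Q - Qin i = {C \<in> Q. \<not> C \<subseteq> V i}" unfolding Qin_def by auto
    ultimately show ?thesis using half[OF that] by simp
  qed
  define gC where "gC C = card {i \<in> {..<t}. \<not> C \<subseteq> V i}" for C
  have dc: "(\<Sum>C\<in>Q. gC C) = (\<Sum>i<t. card {C \<in> Q. \<not> C \<subseteq> V i})"
  proof -
    have "(\<Sum>C\<in>Q. gC C) = (\<Sum>C\<in>Q. \<Sum>i<t. if \<not> C \<subseteq> V i then 1 else 0)"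
      unfolding gC_def by (intro sum.cong refl card_filter_sum) simp
    also have "\<dots> = (\<Sum>i<t. \<Sum>C\<in>Q. if \<not> C \<subseteq> V i then 1 else 0)" by (rule sum.swap)
    also have "\<dots> = (\<Sum>i<t. card {C \<in> Q. \<not> C \<subseteq> V i})"
      using finQ unfolding Q_def by (intro sum.cong refl card_filter_sum[symmetric]) auto
    finally show ?thesis .
  qed
  have "t * card Q \<le> 2 * (\<Sum>C\<in>Q. gC C)"
  proof -
    have "t * card Q = (\<Sum>i<t. card Q)" by simp
    also have "\<dots> \<le> (\<Sum>i<t. 2 * card {C \<in> Q. \<not> C \<subseteq> V i})" using half2 by (intro sum_mono) auto
    also have "\<dots> = 2 * (\<Sum>C\<in>Q. gC C)" unfolding dc by (simp add: sum_distrib_left)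
    finally show ?thesis .
  qed
  have "\<exists>C\<in>Q. t \<le> 2 * gC C"
  proof (rule ccontr)
    assume "\<not> (\<exists>C\<in>Q. t \<le> 2 * gC C)"
    then have "\<forall>C\<in>Q. 2 * gC C < t" by auto
    then have "(\<Sum>C\<in>Q. 2 * gC C) < (\<Sum>C\<in>Q. t)"
      using finQ Qne unfolding Q_def by (intro sum_strict_mono) auto
    moreover have "(\<Sum>C\<in>Q. 2 * gC C) = 2 * (\<Sum>C\<in>Q. gC C)" by (rule sum_distrib_left[symmetric])
    moreover have "(\<Sum>C\<in>Q. t) = t * card Q" by simp
    ultimately have "2 * (\<Sum>C\<in>Q. gC C) < t * card Q" by (simp add: mult.commute)
    then show False using \<open>t * card Q \<le> 2 * (\<Sum>C\<in>Q. gC C)\<close> by simp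
  qed
  then obtain C where C: "C \<in> Q" "t \<le> 2 * gC C" by blast
  then obtain \<phi> where \<phi>: "\<phi> \<in> Rend" "C = (\<lambda>b. \<phi> + b) ` W" unfolding Q_def quot_def by auto
  define Good where "Good = {i \<in> {..<t}. \<not> C \<subseteq> V i}"
  have good: "\<phi> (ys ! i) \<notin> Tset S (take i ys)" if "i \<in> Good" for i
  proof -
    have "i < t" "\<not> C \<subseteq> V i" using that unfolding Good_def by auto
    then have "\<phi> \<notin> V i" using Qmem[OF _ \<phi>(2)] by blast
    then show ?thesis using \<phi>(1) unfolding V_def by blast
  qed
  have lt: "\<phi> (ys ! i) - \<phi> (ys ! j) \<notin> S" if "i \<in> Good" "j < i" for i j
  proof
    assume d: "\<phi> (ys ! i) - \<phi> (ys ! j) \<in> S"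
    have it: "i < t" using that unfolding Good_def by auto
    have ji: "j < length (take i ys)" using that(2) it unfolding t_def by simp
    have "take i ys ! j = ys ! j" using that(2) by simp
    then have "ys ! j \<in> set (take i ys)" using nth_mem[OF ji] by simp
    then have "\<phi> (ys ! j) \<in> Tset S (take i ys)"
      using Rorb_sub_Tset[OF S] \<phi>(1) unfolding Rorb_def by blast
    moreover have "\<phi> (ys ! i) - \<phi> (ys ! j) \<in> Tset S (take i ys)" using d S_sub_Tset[OF S] by blast
    ultimately have "(\<phi> (ys ! i) - \<phi> (ys ! j)) + \<phi> (ys ! j) \<in> Tset S (take i ys)"
      using subg_add[OF subg_Tset[OF S]] by blast
    then show False using good[OF that(1)] by simp
  qed
  have dist: "\<forall>i\<in>Good. \<forall>j\<in>Good. i \<noteq> j \<longrightarrow> \<phi> (ys ! i) - \<phi> (ys ! j) \<notin> S"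
  proof (intro ballI impI)
    fix i j assume ij: "i \<in> Good" "j \<in> Good" "i \<noteq> j"
    show "\<phi> (ys ! i) - \<phi> (ys ! j) \<notin> S"
    proof (cases "j < i")
      case True then show ?thesis using lt ij by blast
    next
      case False
      then have "i < j" using ij by simp
      then have "\<phi> (ys ! j) - \<phi> (ys ! i) \<notin> S" using lt ij by blast
      moreover have "- (\<phi> (ys ! i) - \<phi> (ys ! j)) = \<phi> (ys ! j) - \<phi> (ys ! i)" by simp
      ultimately show ?thesis using subg_neg[OF S] by metis
    qed
  qed
  have "card Good \<le> m"
  proof (rule card_bound[OF S bnd, of \<phi> Good "\<lambda>i. ys ! i"])
    show "endo \<phi>" using \<phi>(1) unfolding Rend_def by simp
    show "finite Good" unfolding Good_def by simp
    show "\<forall>i\<in>Good. ys ! i \<in> S"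
    proof
      fix i assume "i \<in> Good"
      then have "i < length ys" unfolding Good_def t_def by simp
      then have "ys ! i \<in> set ys" by (rule nth_mem)
      then show "ys ! i \<in> S" using ysL by blast
    qed
    show "\<forall>i\<in>Good. \<forall>j\<in>Good. i \<noteq> j \<longrightarrow> \<phi> (ys ! i) - \<phi> (ys ! j) \<notin> S" using dist .
  qed
  moreover have "gC C = card Good" unfolding gC_def Good_def ..
  ultimately show ?thesis using C(2) unfolding t_def by simp
qed


theorem general_ufi:
  fixes S :: "'k::ab_group_add set"
  assumes "uniformly_fully_inert S"
  shows "\<exists>F. fully_invariant F \<and> commensurable S F"
proof -
  have S: "is_subgroup S" using assms unfolding uniformly_fully_inert_def by blast
  obtain m :: nat where m: "m > 0" and bnd: "\<forall>\<phi>. endo \<phi> \<longrightarrow> finite (quot (sumset (\<phi> ` S) S) S) \<and> card (quot (sumset (\<phi> ` S) S) S) \<le> m"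
    using assms unfolding uniformly_fully_inert_def by blast
  define L where "L = S \<inter> Pset S"
  have sL: "is_subgroup L" using S subg_Pset[OF S] unfolding is_subgroup_def L_def by auto
  define chain where "chain ys \<longleftrightarrow> set ys \<subseteq> L \<and> (\<forall>i<length ys. \<not> Rorb (ys ! i) \<subseteq> Tset S (take i ys))" for ys
  have "\<exists>ys. chain ys \<and> (\<forall>y\<in>L. Rorb y \<subseteq> Tset S ys)"
  proof (rule ccontr)
    assume H: "\<not> (\<exists>ys. chain ys \<and> (\<forall>y\<in>L. Rorb y \<subseteq> Tset S ys))"
    have "\<exists>ys. chain ys \<and> length ys = n" for n
    proof (induction n)
      case 0 show ?case by (intro exI[of _ "[]"]) (simp add: chain_def)
    next
      case (Suc n)
      then obtain ys where ys: "chain ys" "length ys = n" by blast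
      then obtain y where y: "y \<in> L" "\<not> Rorb y \<subseteq> Tset S ys" using H by blast
      have "chain (ys @ [y])"
        unfolding chain_def
      proof (intro conjI allI impI)
        show "set (ys @ [y]) \<subseteq> L" using ys(1) y(1) unfolding chain_def by simp
      next
        fix i assume i: "i < length (ys @ [y])"
        show "\<not> Rorb ((ys @ [y]) ! i) \<subseteq> Tset S (take i (ys @ [y]))"
        proof (cases "i < length ys")
          case True
          then have "(ys @ [y]) ! i = ys ! i" "take i (ys @ [y]) = take i ys"
            by (simp_all add: nth_append)
          then show ?thesis using ys(1) True unfolding chain_def by simp
        next
          case False
          then have "i = length ys" using i by simp
          then have "(ys @ [y]) ! i = y" "take i (ys @ [y]) = ys" by simp_all
          then show ?thesis using y(2) by simp
        qed
      qed
      then show ?case using ys(2) by (intro exI[of _ "ys @ [y]"]) simp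
    qed
    then obtain ys where ys: "chain ys" "length ys = Suc (2 * m)" by blast
    have "length ys \<le> 2 * m"
      using chain_bound[OF S bnd, of ys] ys(1) unfolding chain_def L_def by blast
    then show False using ys(2) by simp
  qed
  then obtain ys where ys: "chain ys" "\<forall>y\<in>L. Rorb y \<subseteq> Tset S ys" by blast
  define N where "N = spanR L"
  have fiN: "fully_invariant N" unfolding N_def by (rule spanR_fi)
  have sN: "is_subgroup N" using fiN unfolding fully_invariant_def by blast
  have sT: "is_subgroup (Tset S ys)" using subg_Tset[OF S] .
  have NT: "N \<subseteq> Tset S ys" unfolding N_def using spanR_sub[OF sT ys(2)] .
  obtain F0 where F0: "finite F0" "Tset S ys \<subseteq> sumset F0 S"
    using Tset_fin[OF S, of ys] ys(1) unfolding chain_def L_def by blast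
  have c1: "finite (quot (sumset S N) S)"
  proof -
    have "sumset S N \<subseteq> Tset S ys"
    proof
      fix z assume "z \<in> sumset S N"
      then obtain s n where sn: "s \<in> S" "n \<in> N" "z = s + n" unfolding sumset_def by blast
      then show "z \<in> Tset S ys" using subg_add[OF sT] S_sub_Tset[OF S, of ys] NT by blast
    qed
    then show ?thesis using quot_finite_from_reps[OF S F0(1)] F0(2) by blast
  qed
  have c2: "finite (quot (sumset S N) N)"
  proof -
    have "finite (quot S L)" using step1[OF S m bnd] unfolding L_def .
    then obtain F1 where F1: "finite F1" "S \<subseteq> sumset F1 L" using quot_reps[OF _ sL] by blast
    have LN: "L \<subseteq> N" unfolding N_def by (rule L_sub_spanR)
    have "sumset S N \<subseteq> sumset F1 N"
    proof
      fix z assume "z \<in> sumset S N"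
      then obtain s n where sn: "s \<in> S" "n \<in> N" "z = s + n" unfolding sumset_def by blast
      then obtain f l where fl: "f \<in> F1" "l \<in> L" "s = f + l" using F1(2) unfolding sumset_def by blast
      have "l + n \<in> N" using subg_add[OF sN] fl(2) LN sn(2) by blast
      moreover have "z = f + (l + n)" using sn fl by (simp add: add.assoc)
      ultimately show "z \<in> sumset F1 N" unfolding sumset_def using fl(1) by blast
    qed
    then show ?thesis using quot_finite_from_reps[OF sN F1(1)] by blast
  qed
  show ?thesis using fiN c1 c2 unfolding commensurable_def by blast
qed

theorem proposition2p2:
  fixes S :: "('a::ab_group_add \<times> 'a) set"
  assumes "uniformly_fully_inert S"
  shows "\<exists>F :: ('a \<times> 'a) set. fully_invariant F \<and> commensurable S F"
  using general_ufi[OF assms] .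

end
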